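(* Let $X$ be a connected thin combinatorial $2$-complex, and let $\mathcal H\le\mathrm{Aut}(X)$ be finitely generated relative to a finite collection of $0$-cell stabilizers. If $C$ is a compact subcomplex of $X$, then there is a connected compact subcomplex $Y_0$ of $X$ containing $C$ such that: (1) $\mathcal H$ is finitely generated relative to the stabilizers of a (finite) collection of $0$-cells of $Y_0$; and (2) $Y=\bigcup_{g\in\mathcal H}gY_0$ is a connected $\mathcal H$-cocompact subcomplex of $X$.
   Context: $\mathrm{Aut}(X)$ is the group of cellular automorphisms of $X$. A side at a $1$-cell $x$ is a pair $(R,r)$ with $R$ a $2$-cell and $r$ a $1$-cell of $\partial R$ mapping to $x$; $X$ is thin if each $1$-cell has finitely many sides. $\mathcal H$ is finitely generated relative to a finite collection of $0$-cell stabilizers if there are $0$-cells $v_1,\dots,v_n$ and a finite $S\subset\mathcal H$ with $S\cup\bigcup_i\mathrm{Stab}_{\mathcal H}(v_i)$ generating $\mathcal H$. A subcomplex is $\mathcal H$-cocompact if it is $\mathcal H$-invariant and has finitely many $\mathcal H$-orbits of cells. *)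

theory Defs
  imports "HOL-Algebra.Generated_Groups"
begin

text \<open>Each 1-cell e has a source and target 0-cell (loops and multiple 1-cells allowed).
  The attaching map of a 2-cell R is a closed combinatorial path bnd R, a nonempty list of
  oriented 1-cells (e, True) = traverse e forwards, (e, False) = backwards.\<close>

record ('v, 'e, 'f) cx2 =
  verts :: "'v set"
  edges :: "'e set"
  faces :: "'f set"
  src :: "'e \<Rightarrow> 'v"
  tgt :: "'e \<Rightarrow> 'v"
  bnd :: "'f \<Rightarrow> ('e \<times> bool) list"

definition ostart :: "('v, 'e, 'f) cx2 \<Rightarrow> 'e \<times> bool \<Rightarrow> 'v" where
  "ostart X p = (if snd p then src X (fst p) else tgt X (fst p))"

definition oend :: "('v, 'e, 'f) cx2 \<Rightarrow> 'e \<times> bool \<Rightarrow> 'v" where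
  "oend X p = (if snd p then tgt X (fst p) else src X (fst p))"

definition closed_path :: "('v, 'e, 'f) cx2 \<Rightarrow> ('e \<times> bool) list \<Rightarrow> bool" where
  "closed_path X p \<longleftrightarrow> p \<noteq> [] \<and> (\<forall>x\<in>set p. fst x \<in> edges X) \<and>
     (\<forall>i < length p. oend X (p ! i) = ostart X (p ! (Suc i mod length p)))"

definition comb2complex :: "('v, 'e, 'f) cx2 \<Rightarrow> bool" where
  "comb2complex X \<longleftrightarrow>
     (\<forall>e\<in>edges X. src X e \<in> verts X \<and> tgt X e \<in> verts X) \<and>
     (\<forall>R\<in>faces X. closed_path X (bnd X R))"

definition sides :: "('v, 'e, 'f) cx2 \<Rightarrow> 'e \<Rightarrow> ('f \<times> nat) set" where
  "sides X x = {(R, i). R \<in> faces X \<and> i < length (bnd X R) \<and> fst (bnd X R ! i) = x}"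

definition thin :: "('v, 'e, 'f) cx2 \<Rightarrow> bool" where
  "thin X \<longleftrightarrow> (\<forall>x\<in>edges X. finite (sides X x))"

definition subcomplex :: "('v, 'e, 'f) cx2 \<Rightarrow> 'v set \<Rightarrow> 'e set \<Rightarrow> 'f set \<Rightarrow> bool" where
  "subcomplex X V E F \<longleftrightarrow> V \<subseteq> verts X \<and> E \<subseteq> edges X \<and> F \<subseteq> faces X \<and>
     (\<forall>e\<in>E. src X e \<in> V \<and> tgt X e \<in> V) \<and>
     (\<forall>R\<in>F. \<forall>x\<in>set (bnd X R). fst x \<in> E)"

definition compact_sub :: "'v set \<Rightarrow> 'e set \<Rightarrow> 'f set \<Rightarrow> bool" where
  "compact_sub V E F \<longleftrightarrow> finite V \<and> finite E \<and> finite F"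

text \<open>Connectedness (equivalently, connectedness of the 1-skeleton): any two 0-cells
  are joined by an edge path inside the subcomplex.\<close>
definition adj_in :: "('v, 'e, 'f) cx2 \<Rightarrow> 'e set \<Rightarrow> 'v \<Rightarrow> 'v \<Rightarrow> bool" where
  "adj_in X E u w \<longleftrightarrow> (\<exists>e\<in>E. (src X e = u \<and> tgt X e = w) \<or> (src X e = w \<and> tgt X e = u))"

definition connected_sub :: "('v, 'e, 'f) cx2 \<Rightarrow> 'v set \<Rightarrow> 'e set \<Rightarrow> 'f set \<Rightarrow> bool" where
  "connected_sub X V E F \<longleftrightarrow> (\<forall>u\<in>V. \<forall>w\<in>V. (adj_in X E)\<^sup>*\<^sup>* u w)"

text \<open>Cellular automorphisms: bijections on 0-,1-,2-cells, with an orientation flag on 1-cells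
  (True = orientation preserved), compatible with endpoints, and carrying the boundary path of
  each 2-cell R to the boundary path of its image up to rotation and reversal.\<close>
definition rev_path :: "('e \<times> bool) list \<Rightarrow> ('e \<times> bool) list" where
  "rev_path p = rev (map (\<lambda>(e, b). (e, \<not> b)) p)"

definition cell_aut :: "('v, 'e, 'f) cx2 \<Rightarrow> ('v \<Rightarrow> 'v) \<Rightarrow> ('e \<Rightarrow> 'e) \<Rightarrow> ('e \<Rightarrow> bool)
    \<Rightarrow> ('f \<Rightarrow> 'f) \<Rightarrow> bool" where
  "cell_aut X fv fe oe ff \<longleftrightarrow>
     bij_betw fv (verts X) (verts X) \<and> bij_betw fe (edges X) (edges X) \<and>
     bij_betw ff (faces X) (faces X) \<and>
     (\<forall>e\<in>edges X. if oe e then src X (fe e) = fv (src X e) \<and> tgt X (fe e) = fv (tgt X e)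
                          else src X (fe e) = fv (tgt X e) \<and> tgt X (fe e) = fv (src X e)) \<and>
     (\<forall>R\<in>faces X. \<exists>k. map (\<lambda>(e, b). (fe e, b = oe e)) (bnd X R) = rotate k (bnd X (ff R))
                      \<or> map (\<lambda>(e, b). (fe e, b = oe e)) (bnd X R) = rotate k (rev_path (bnd X (ff R))))"

text \<open>A group G together with a faithful action on X by cellular automorphisms; this is the
  same as a subgroup H of Aut(X).\<close>
definition faithful_cell_action ::
  "('g, 'm) monoid_scheme \<Rightarrow> ('v, 'e, 'f) cx2 \<Rightarrow> ('g \<Rightarrow> 'v \<Rightarrow> 'v) \<Rightarrow> ('g \<Rightarrow> 'e \<Rightarrow> 'e)
    \<Rightarrow> ('g \<Rightarrow> 'e \<Rightarrow> bool) \<Rightarrow> ('g \<Rightarrow> 'f \<Rightarrow> 'f) \<Rightarrow> bool" where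
  "faithful_cell_action G X av ae ao af \<longleftrightarrow>
     group G \<and>
     (\<forall>g\<in>carrier G. cell_aut X (av g) (ae g) (ao g) (af g)) \<and>
     (\<forall>g\<in>carrier G. \<forall>h\<in>carrier G.
        (\<forall>v\<in>verts X. av (g \<otimes>\<^bsub>G\<^esub> h) v = av g (av h v)) \<and>
        (\<forall>e\<in>edges X. ae (g \<otimes>\<^bsub>G\<^esub> h) e = ae g (ae h e) \<and>
                       ao (g \<otimes>\<^bsub>G\<^esub> h) e = (ao g (ae h e) = ao h e)) \<and>
        (\<forall>R\<in>faces X. af (g \<otimes>\<^bsub>G\<^esub> h) R = af g (af h R))) \<and>
     (\<forall>v\<in>verts X. av \<one>\<^bsub>G\<^esub> v = v) \<and>
     (\<forall>e\<in>edges X. ae \<one>\<^bsub>G\<^esub> e = e \<and> ao \<one>\<^bsub>G\<^esub> e) \<and>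
     (\<forall>R\<in>faces X. af \<one>\<^bsub>G\<^esub> R = R) \<and>
     (\<forall>g\<in>carrier G. (\<forall>v\<in>verts X. av g v = v) \<and> (\<forall>e\<in>edges X. ae g e = e \<and> ao g e) \<and>
                    (\<forall>R\<in>faces X. af g R = R) \<longrightarrow> g = \<one>\<^bsub>G\<^esub>)"

definition vstab :: "('g, 'm) monoid_scheme \<Rightarrow> ('g \<Rightarrow> 'v \<Rightarrow> 'v) \<Rightarrow> 'v \<Rightarrow> 'g set" where
  "vstab G av v = {g \<in> carrier G. av g v = v}"

definition fg_rel_stabs :: "('g, 'm) monoid_scheme \<Rightarrow> ('g \<Rightarrow> 'v \<Rightarrow> 'v) \<Rightarrow> 'v set \<Rightarrow> bool" where
  "fg_rel_stabs G av W \<longleftrightarrow>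
     (\<exists>S vs. finite S \<and> S \<subseteq> carrier G \<and> finite vs \<and> vs \<subseteq> W \<and>
        generate G (S \<union> (\<Union>v\<in>vs. vstab G av v)) = carrier G)"

definition cocompact_sub ::
  "('g, 'm) monoid_scheme \<Rightarrow> ('g \<Rightarrow> 'v \<Rightarrow> 'v) \<Rightarrow> ('g \<Rightarrow> 'e \<Rightarrow> 'e) \<Rightarrow> ('g \<Rightarrow> 'f \<Rightarrow> 'f)
    \<Rightarrow> 'v set \<Rightarrow> 'e set \<Rightarrow> 'f set \<Rightarrow> bool" where
  "cocompact_sub G av ae af V E F \<longleftrightarrow>
     (\<forall>g\<in>carrier G. av g ` V \<subseteq> V \<and> ae g ` E \<subseteq> E \<and> af g ` F \<subseteq> F) \<and>
     (\<exists>A B D. finite A \<and> A \<subseteq> V \<and> finite B \<and> B \<subseteq> E \<and> finite D \<and> D \<subseteq> F \<and>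
        V \<subseteq> (\<Union>g\<in>carrier G. av g ` A) \<and> E \<subseteq> (\<Union>g\<in>carrier G. ae g ` B) \<and>
        F \<subseteq> (\<Union>g\<in>carrier G. af g ` D))"

end

theory Submission
  imports Defs
begin

lemma adj_mono: "E \<subseteq> E' \<Longrightarrow> adj_in X E u w \<Longrightarrow> adj_in X E' u w"
  unfolding adj_in_def by blast

lemma rtc_mono:
  assumes "E \<subseteq> E'" "(adj_in X E)\<^sup>*\<^sup>* u w" shows "(adj_in X E')\<^sup>*\<^sup>* u w"
  using assms(2)
  by (induction rule: rtranclp_induct) (auto intro: rtranclp.rtrancl_into_rtrancl adj_mono[OF assms(1)])

lemma adj_sym: "adj_in X E u w \<Longrightarrow> adj_in X E w u"
  unfolding adj_in_def by blast

lemma rtc_sym: "(adj_in X E)\<^sup>*\<^sup>* u w \<Longrightarrow> (adj_in X E)\<^sup>*\<^sup>* w u"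
  by (induction rule: rtranclp_induct) (auto intro: converse_rtranclp_into_rtranclp adj_sym)

lemma path_fin:
  assumes "(adj_in X E)\<^sup>*\<^sup>* u w"
  shows "\<exists>P. finite P \<and> P \<subseteq> E \<and> (adj_in X P)\<^sup>*\<^sup>* u w \<and>
    (\<forall>e\<in>P. (adj_in X P)\<^sup>*\<^sup>* u (src X e) \<and> (adj_in X P)\<^sup>*\<^sup>* u (tgt X e))"
  using assms
proof (induction rule: rtranclp_induct)
  case base
  then show ?case by (intro exI[of _ "{}"]) auto
next
  case (step y z)
  then obtain P where P: "finite P" "P \<subseteq> E" "(adj_in X P)\<^sup>*\<^sup>* u y"
    "\<forall>e\<in>P. (adj_in X P)\<^sup>*\<^sup>* u (src X e) \<and> (adj_in X P)\<^sup>*\<^sup>* u (tgt X e)" by blast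
  from step(2) obtain e where e: "e \<in> E" "(src X e = y \<and> tgt X e = z) \<or> (src X e = z \<and> tgt X e = y)"
    unfolding adj_in_def by blast
  let ?P = "insert e P"
  have sub: "P \<subseteq> ?P" by blast
  have yP: "(adj_in X ?P)\<^sup>*\<^sup>* u y" using rtc_mono[OF sub P(3)] .
  have a: "adj_in X ?P y z" using e unfolding adj_in_def by blast
  have zP: "(adj_in X ?P)\<^sup>*\<^sup>* u z" using yP a by (rule rtranclp.rtrancl_into_rtrancl)
  have "\<forall>e'\<in>?P. (adj_in X ?P)\<^sup>*\<^sup>* u (src X e') \<and> (adj_in X ?P)\<^sup>*\<^sup>* u (tgt X e')"
  proof
    fix e' assume "e' \<in> ?P"
    then show "(adj_in X ?P)\<^sup>*\<^sup>* u (src X e') \<and> (adj_in X ?P)\<^sup>*\<^sup>* u (tgt X e')"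
    proof
      assume ee: "e' = e"
      from e(2) show ?thesis
      proof
        assume "src X e = y \<and> tgt X e = z" then show ?thesis using yP zP ee by simp
      next
        assume "src X e = z \<and> tgt X e = y" then show ?thesis using yP zP ee by simp
      qed
    next
      assume "e' \<in> P"
      then have h: "(adj_in X P)\<^sup>*\<^sup>* u (src X e') \<and> (adj_in X P)\<^sup>*\<^sup>* u (tgt X e')" using P(4) by blast
      show ?thesis using rtc_mono[OF sub conjunct1[OF h]] rtc_mono[OF sub conjunct2[OF h]] by (rule conjI)
    qed
  qed
  then show ?case using P e zP by (intro exI[of _ ?P]) auto
qed

lemma fst_rev_path: "fst ` set (rev_path p) = fst ` set p"
  unfolding rev_path_def by (induction p) auto

lemma fst_map_set: "fst ` set (map (\<lambda>(e, b). (fe e, b = oe e)) l) = fe ` fst ` set l"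
  by (induction l) auto

lemma face_img:
  assumes "cell_aut X fv fe oe ff" "R \<in> faces X" "x \<in> set (bnd X (ff R))"
  shows "fst x \<in> fe ` fst ` set (bnd X R)"
proof -
  obtain k where k: "map (\<lambda>(e, b). (fe e, b = oe e)) (bnd X R) = rotate k (bnd X (ff R))
                      \<or> map (\<lambda>(e, b). (fe e, b = oe e)) (bnd X R) = rotate k (rev_path (bnd X (ff R)))"
    using assms(1,2) unfolding cell_aut_def by blast
  have "set (map (\<lambda>(e, b). (fe e, b = oe e)) (bnd X R)) = set (bnd X (ff R)) \<or>
        set (map (\<lambda>(e, b). (fe e, b = oe e)) (bnd X R)) = set (rev_path (bnd X (ff R)))"
    using k by (elim disjE) (simp_all only: set_rotate simp_thms)
  then have "fst ` set (bnd X (ff R)) = fst ` set (map (\<lambda>(e, b). (fe e, b = oe e)) (bnd X R))"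
    using fst_rev_path[of "bnd X (ff R)"] by (elim disjE) simp_all
  then have "fst ` set (bnd X (ff R)) = fe ` fst ` set (bnd X R)"
    using fst_map_set[of fe oe "bnd X R"] by simp
  then show ?thesis using assms(3) by blast
qed

lemma edge_img:
  assumes "cell_aut X fv fe oe ff" "e \<in> edges X"
  shows "(src X (fe e) = fv (src X e) \<and> tgt X (fe e) = fv (tgt X e)) \<or>
         (src X (fe e) = fv (tgt X e) \<and> tgt X (fe e) = fv (src X e))"
proof -
  have "if oe e then src X (fe e) = fv (src X e) \<and> tgt X (fe e) = fv (tgt X e)
        else src X (fe e) = fv (tgt X e) \<and> tgt X (fe e) = fv (src X e)"
    using assms unfolding cell_aut_def by blast
  then show ?thesis by (auto split: if_splits)
qed

theorem lemma3p21:
  fixes X :: "('v, 'e, 'f) cx2"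
    and G :: "('g, 'm) monoid_scheme"
    and av :: "'g \<Rightarrow> 'v \<Rightarrow> 'v" and ae :: "'g \<Rightarrow> 'e \<Rightarrow> 'e"
    and ao :: "'g \<Rightarrow> 'e \<Rightarrow> bool" and af :: "'g \<Rightarrow> 'f \<Rightarrow> 'f"
    and CV :: "'v set" and CE :: "'e set" and CF :: "'f set"
  assumes "comb2complex X"
    and "connected_sub X (verts X) (edges X) (faces X)"
    and "thin X"
    and "faithful_cell_action G X av ae ao af"
    and "fg_rel_stabs G av (verts X)"
    and "subcomplex X CV CE CF" and "compact_sub CV CE CF"
  shows "\<exists>V0 E0 F0. subcomplex X V0 E0 F0 \<and> compact_sub V0 E0 F0 \<and>
           connected_sub X V0 E0 F0 \<and> CV \<subseteq> V0 \<and> CE \<subseteq> E0 \<and> CF \<subseteq> F0 \<and>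
           fg_rel_stabs G av V0 \<and>
           (let V = (\<Union>g\<in>carrier G. av g ` V0);
                E = (\<Union>g\<in>carrier G. ae g ` E0);
                F = (\<Union>g\<in>carrier G. af g ` F0)
            in subcomplex X V E F \<and> connected_sub X V E F \<and>
               cocompact_sub G av ae af V E F)"
proof -
  note fa = assms(4)[unfolded faithful_cell_action_def]
  have grp: "group G" using fa by blast
  have aut: "\<And>g. g \<in> carrier G \<Longrightarrow> cell_aut X (av g) (ae g) (ao g) (af g)" using fa by blast
  have compv: "\<And>g h v. g \<in> carrier G \<Longrightarrow> h \<in> carrier G \<Longrightarrow> v \<in> verts X \<Longrightarrow>
      av (g \<otimes>\<^bsub>G\<^esub> h) v = av g (av h v)" using fa by blast
  have compe: "\<And>g h e. g \<in> carrier G \<Longrightarrow> h \<in> carrier G \<Longrightarrow> e \<in> edges X \<Longrightarrow>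
      ae (g \<otimes>\<^bsub>G\<^esub> h) e = ae g (ae h e)" using fa by blast
  have compf: "\<And>g h R. g \<in> carrier G \<Longrightarrow> h \<in> carrier G \<Longrightarrow> R \<in> faces X \<Longrightarrow>
      af (g \<otimes>\<^bsub>G\<^esub> h) R = af g (af h R)" using fa by blast
  have onev: "\<And>v. v \<in> verts X \<Longrightarrow> av \<one>\<^bsub>G\<^esub> v = v" using fa by blast
  have onee: "\<And>e. e \<in> edges X \<Longrightarrow> ae \<one>\<^bsub>G\<^esub> e = e" using fa by blast
  have onef: "\<And>R. R \<in> faces X \<Longrightarrow> af \<one>\<^bsub>G\<^esub> R = R" using fa by blast
  have one_c: "\<one>\<^bsub>G\<^esub> \<in> carrier G" using grp by (simp add: group.is_monoid monoid.one_closed)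
  have mult_c: "\<And>g h. g \<in> carrier G \<Longrightarrow> h \<in> carrier G \<Longrightarrow> g \<otimes>\<^bsub>G\<^esub> h \<in> carrier G"
    using grp by (simp add: group.is_monoid monoid.m_closed)
  have avv: "\<And>g v. g \<in> carrier G \<Longrightarrow> v \<in> verts X \<Longrightarrow> av g v \<in> verts X"
    using aut unfolding cell_aut_def by (meson bij_betw_apply)
  have aee: "\<And>g e. g \<in> carrier G \<Longrightarrow> e \<in> edges X \<Longrightarrow> ae g e \<in> edges X"
    using aut unfolding cell_aut_def by (meson bij_betw_apply)
  have aff: "\<And>g R. g \<in> carrier G \<Longrightarrow> R \<in> faces X \<Longrightarrow> af g R \<in> faces X"
    using aut unfolding cell_aut_def by (meson bij_betw_apply)
  have cx: "\<And>e. e \<in> edges X \<Longrightarrow> src X e \<in> verts X \<and> tgt X e \<in> verts X"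
    using assms(1) unfolding comb2complex_def by blast
  obtain S vs where S: "finite S" "S \<subseteq> carrier G" "finite vs" "vs \<subseteq> verts X"
    "generate G (S \<union> (\<Union>v\<in>vs. vstab G av v)) = carrier G"
    using assms(5) unfolding fg_rel_stabs_def by blast
  note C = assms(6)[unfolded subcomplex_def]
  show ?thesis
  proof (cases "verts X = {}")
    case True
    have CV: "CV = {}" using C True by blast
    have CE: "CE = {}" using C CV by blast
    have CF: "CF = {}"
    proof (rule ccontr)
      assume "CF \<noteq> {}"
      then obtain R where R: "R \<in> CF" by blast
      then have "R \<in> faces X" using C by blast
      then have "bnd X R \<noteq> []" using assms(1) unfolding comb2complex_def closed_path_def by blast
      then obtain x where "x \<in> set (bnd X R)" by (meson list.set_sel(1))
      then show False using C R CE by blast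
    qed
    have fg: "fg_rel_stabs G av {}"
      unfolding fg_rel_stabs_def using S True by (intro exI[of _ S] exI[of _ vs]) auto
    show ?thesis
      apply (rule exI[of _ "{}"], rule exI[of _ "{}"], rule exI[of _ "{}"])
      using fg CV CE CF
      by (simp add: subcomplex_def compact_sub_def connected_sub_def cocompact_sub_def Let_def)
  next
    case False
    then obtain v0 where v0: "v0 \<in> verts X" by blast
    define T where "T = CV \<union> vs \<union> (\<lambda>s. av s v0) ` S"
    have Tfin: "finite T" unfolding T_def using S assms(7) unfolding compact_sub_def by blast
    have Tv: "T \<subseteq> verts X" unfolding T_def using S C avv v0 by blast
    have "\<forall>t\<in>T. \<exists>P. finite P \<and> P \<subseteq> edges X \<and> (adj_in X P)\<^sup>*\<^sup>* v0 t \<and>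
      (\<forall>e\<in>P. (adj_in X P)\<^sup>*\<^sup>* v0 (src X e) \<and> (adj_in X P)\<^sup>*\<^sup>* v0 (tgt X e))"
    proof
      fix t assume "t \<in> T"
      then have "(adj_in X (edges X))\<^sup>*\<^sup>* v0 t"
        using assms(2) Tv v0 unfolding connected_sub_def by blast
      then show "\<exists>P. finite P \<and> P \<subseteq> edges X \<and> (adj_in X P)\<^sup>*\<^sup>* v0 t \<and>
      (\<forall>e\<in>P. (adj_in X P)\<^sup>*\<^sup>* v0 (src X e) \<and> (adj_in X P)\<^sup>*\<^sup>* v0 (tgt X e))"
        by (rule path_fin)
    qed
    then obtain P where P: "\<And>t. t \<in> T \<Longrightarrow> finite (P t) \<and> P t \<subseteq> edges X \<and> (adj_in X (P t))\<^sup>*\<^sup>* v0 t \<and>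
      (\<forall>e\<in>P t. (adj_in X (P t))\<^sup>*\<^sup>* v0 (src X e) \<and> (adj_in X (P t))\<^sup>*\<^sup>* v0 (tgt X e))"
      by metis
    define V0 where "V0 = insert v0 (T \<union> (\<Union>t\<in>T. src X ` P t \<union> tgt X ` P t))"
    define E0 where "E0 = CE \<union> (\<Union>t\<in>T. P t)"
    define F0 where "F0 = CF"
    have V0v: "V0 \<subseteq> verts X" unfolding V0_def using v0 Tv P cx by blast
    have E0e: "E0 \<subseteq> edges X" unfolding E0_def using C P by blast
    have F0f: "F0 \<subseteq> faces X" unfolding F0_def using C by blast
    have sub0: "subcomplex X V0 E0 F0"
      unfolding subcomplex_def using V0v E0e F0f C
      unfolding V0_def E0_def F0_def T_def by blast
    have comp0: "compact_sub V0 E0 F0"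
      unfolding compact_sub_def V0_def E0_def F0_def using Tfin P assms(7)
      unfolding compact_sub_def by auto
    have conn0: "\<And>x. x \<in> V0 \<Longrightarrow> (adj_in X E0)\<^sup>*\<^sup>* v0 x"
    proof -
      fix x assume "x \<in> V0"
      then consider "x = v0" | t where "t \<in> T" "(adj_in X (P t))\<^sup>*\<^sup>* v0 x"
        unfolding V0_def using P by blast
      then show "(adj_in X E0)\<^sup>*\<^sup>* v0 x"
      proof cases
        case 1 then show ?thesis by simp
      next
        case 2
        have sb: "P t \<subseteq> E0" unfolding E0_def using 2 by blast
        show ?thesis by (rule rtc_mono[OF sb 2(2)])
      qed
    qed
    have connected0: "connected_sub X V0 E0 F0"
      unfolding connected_sub_def
    proof (intro ballI)
      fix u w assume u: "u \<in> V0" and w: "w \<in> V0"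
      show "(adj_in X E0)\<^sup>*\<^sup>* u w" by (rule rtranclp_trans[OF rtc_sym[OF conn0[OF u]] conn0[OF w]])
    qed
    have fg0: "fg_rel_stabs G av V0"
      unfolding fg_rel_stabs_def using S
      by (intro exI[of _ S] exI[of _ vs]) (auto simp: V0_def T_def)
    define V where "V = (\<Union>g\<in>carrier G. av g ` V0)"
    define E where "E = (\<Union>g\<in>carrier G. ae g ` E0)"
    define F where "F = (\<Union>g\<in>carrier G. af g ` F0)"
    have Ee: "E \<subseteq> edges X" unfolding E_def using E0e aee by blast
    have E0E: "E0 \<subseteq> E" unfolding E_def using one_c onee E0e by force
    have invV: "\<And>h. h \<in> carrier G \<Longrightarrow> av h ` V \<subseteq> V"
    proof
      fix h x assume h: "h \<in> carrier G" and "x \<in> av h ` V"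
      then obtain g v where g: "g \<in> carrier G" "v \<in> V0" "x = av h (av g v)" unfolding V_def by blast
      then have "x = av (h \<otimes>\<^bsub>G\<^esub> g) v" using compv h V0v by auto
      then show "x \<in> V" unfolding V_def using g mult_c h by blast
    qed
    have invE: "\<And>h. h \<in> carrier G \<Longrightarrow> ae h ` E \<subseteq> E"
    proof
      fix h x assume h: "h \<in> carrier G" and "x \<in> ae h ` E"
      then obtain g v where g: "g \<in> carrier G" "v \<in> E0" "x = ae h (ae g v)" unfolding E_def by blast
      then have "x = ae (h \<otimes>\<^bsub>G\<^esub> g) v" using compe h E0e by auto
      then show "x \<in> E" unfolding E_def using g mult_c h by blast
    qed
    have invF: "\<And>h. h \<in> carrier G \<Longrightarrow> af h ` F \<subseteq> F"
    proof
      fix h x assume h: "h \<in> carrier G" and "x \<in> af h ` F"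
      then obtain g v where g: "g \<in> carrier G" "v \<in> F0" "x = af h (af g v)" unfolding F_def by blast
      then have "x = af (h \<otimes>\<^bsub>G\<^esub> g) v" using compf h F0f by auto
      then show "x \<in> F" unfolding F_def using g mult_c h by blast
    qed
    have subY: "subcomplex X V E F"
    proof -
      have "V \<subseteq> verts X" unfolding V_def using V0v avv by blast
      moreover have "F \<subseteq> faces X" unfolding F_def using F0f aff by blast
      moreover have "\<forall>e\<in>E. src X e \<in> V \<and> tgt X e \<in> V"
      proof
        fix e assume "e \<in> E"
        then obtain g e' where g: "g \<in> carrier G" "e' \<in> E0" "e = ae g e'" unfolding E_def by blast
        have "src X e' \<in> V0" "tgt X e' \<in> V0" using sub0 g unfolding subcomplex_def by auto
        then have "av g (src X e') \<in> V" "av g (tgt X e') \<in> V" unfolding V_def using g by auto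
        moreover have "e' \<in> edges X" using g E0e by blast
        ultimately show "src X e \<in> V \<and> tgt X e \<in> V"
          using edge_img[OF aut[OF g(1)], of e'] g by auto
      qed
      moreover have "\<forall>R\<in>F. \<forall>x\<in>set (bnd X R). fst x \<in> E"
      proof (intro ballI)
        fix R x assume "R \<in> F" "x \<in> set (bnd X R)"
        then obtain g R' where g: "g \<in> carrier G" "R' \<in> F0" "R = af g R'" unfolding F_def by blast
        then have "fst x \<in> ae g ` fst ` set (bnd X R')"
          using face_img[OF aut[OF g(1)]] F0f \<open>x \<in> set (bnd X R)\<close> by blast
        moreover have "fst ` set (bnd X R') \<subseteq> E0" using sub0 g unfolding subcomplex_def by blast
        ultimately show "fst x \<in> E" unfolding E_def using g by blast
      qed
      ultimately show ?thesis using Ee unfolding subcomplex_def by blast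
    qed
    have act: "\<And>h x y. h \<in> carrier G \<Longrightarrow> (adj_in X E)\<^sup>*\<^sup>* x y \<Longrightarrow> (adj_in X E)\<^sup>*\<^sup>* (av h x) (av h y)"
    proof -
      fix h x y assume h: "h \<in> carrier G" and xy: "(adj_in X E)\<^sup>*\<^sup>* x y"
      from xy show "(adj_in X E)\<^sup>*\<^sup>* (av h x) (av h y)"
      proof (induction rule: rtranclp_induct)
        case base then show ?case by simp
      next
        case (step y z)
        from step(2) obtain e where e: "e \<in> E" "(src X e = y \<and> tgt X e = z) \<or> (src X e = z \<and> tgt X e = y)"
          unfolding adj_in_def by blast
        have "ae h e \<in> E" using invE h e by blast
        moreover have "e \<in> edges X" using Ee e by blast
        ultimately have "adj_in X E (av h y) (av h z)"
          using edge_img[OF aut[OF h], of e] e unfolding adj_in_def by metis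
        with step(3) show ?case by (rule rtranclp.rtrancl_into_rtrancl)
      qed
    qed
    define Gen where "Gen = S \<union> (\<Union>v\<in>vs. vstab G av v)"
    have Genc: "Gen \<subseteq> carrier G" unfolding Gen_def vstab_def using S by blast
    have genK: "\<And>h. h \<in> Gen \<Longrightarrow> (adj_in X E)\<^sup>*\<^sup>* v0 (av h v0)"
    proof -
      fix h assume "h \<in> Gen"
      then consider "h \<in> S" | w where "w \<in> vs" "h \<in> carrier G" "av h w = w"
        unfolding Gen_def vstab_def by blast
      then show "(adj_in X E)\<^sup>*\<^sup>* v0 (av h v0)"
      proof cases
        case 1
        then have "av h v0 \<in> V0" unfolding V0_def T_def by blast
        then show ?thesis by (rule rtc_mono[OF E0E conn0])
      next
        case 2
        then have "w \<in> V0" unfolding V0_def T_def by blast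
        then have w: "(adj_in X E)\<^sup>*\<^sup>* v0 w" by (rule rtc_mono[OF E0E conn0])
        have hw: "(adj_in X E)\<^sup>*\<^sup>* (av h v0) w" using act[OF 2(2) w] 2 by simp
        show ?thesis by (rule rtranclp_trans[OF w rtc_sym[OF hw]])
      qed
    qed
    have K: "\<And>g. g \<in> generate G Gen \<Longrightarrow> (adj_in X E)\<^sup>*\<^sup>* v0 (av g v0)"
    proof -
      fix g assume "g \<in> generate G Gen"
      then show "(adj_in X E)\<^sup>*\<^sup>* v0 (av g v0)"
      proof (induction rule: generate.induct)
        case one then show ?case using onev v0 by simp
      next
        case (incl h) then show ?case using genK by blast
      next
        case (inv h)
        have hc: "h \<in> carrier G" using inv Genc by blast
        have ic: "inv\<^bsub>G\<^esub> h \<in> carrier G" using grp hc by (simp add: group.inv_closed)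
        have A: "(adj_in X E)\<^sup>*\<^sup>* (av (inv\<^bsub>G\<^esub> h) v0) (av (inv\<^bsub>G\<^esub> h) (av h v0))"
          using act[OF ic genK[OF inv]] .
        have B: "av (inv\<^bsub>G\<^esub> h) (av h v0) = v0"
          using compv[OF ic hc v0] grp hc onev[OF v0] by (simp add: group.l_inv)
        show ?case using rtc_sym[OF A[unfolded B]] .
      next
        case (eng h1 h2)
        have c: "h1 \<in> carrier G" "h2 \<in> carrier G" using eng.hyps S(5) unfolding Gen_def by auto
        have "(adj_in X E)\<^sup>*\<^sup>* (av h1 v0) (av h1 (av h2 v0))" using act[OF c(1) eng.IH(2)] .
        then have "(adj_in X E)\<^sup>*\<^sup>* (av h1 v0) (av (h1 \<otimes>\<^bsub>G\<^esub> h2) v0)"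
          using compv[OF c v0] by simp
        then show ?case by (rule rtranclp_trans[OF eng.IH(1)])
      qed
    qed
    have connY: "connected_sub X V E F"
    proof -
      have "\<And>x. x \<in> V \<Longrightarrow> (adj_in X E)\<^sup>*\<^sup>* v0 x"
      proof -
        fix x assume "x \<in> V"
        then obtain g u where g: "g \<in> carrier G" "u \<in> V0" "x = av g u" unfolding V_def by blast
        have U: "(adj_in X E)\<^sup>*\<^sup>* v0 u" by (rule rtc_mono[OF E0E conn0[OF g(2)]])
        have K2: "(adj_in X E)\<^sup>*\<^sup>* (av g v0) x" using act[OF g(1) U] g(3) by simp
        have gg: "g \<in> generate G Gen" using g(1) S(5) unfolding Gen_def by simp
        have K1: "(adj_in X E)\<^sup>*\<^sup>* v0 (av g v0)" by (rule K[OF gg])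
        show "(adj_in X E)\<^sup>*\<^sup>* v0 x" by (rule rtranclp_trans[OF K1 K2])
      qed
      then show ?thesis unfolding connected_sub_def
      proof (intro ballI)
        fix u w assume cc: "\<And>x. x \<in> V \<Longrightarrow> (adj_in X E)\<^sup>*\<^sup>* v0 x" and u: "u \<in> V" and w: "w \<in> V"
        show "(adj_in X E)\<^sup>*\<^sup>* u w" by (rule rtranclp_trans[OF rtc_sym[OF cc[OF u]] cc[OF w]])
      qed
    qed
    have cocY: "cocompact_sub G av ae af V E F"
      unfolding cocompact_sub_def
    proof (intro conjI ballI)
      fix g assume "g \<in> carrier G"
      then show "av g ` V \<subseteq> V" "ae g ` E \<subseteq> E" "af g ` F \<subseteq> F" using invV invE invF by auto
    next
      have "V0 \<subseteq> V" unfolding V_def using one_c onev V0v by force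
      moreover have "F0 \<subseteq> F" unfolding F_def using one_c onef F0f by force
      ultimately show "\<exists>A B D. finite A \<and> A \<subseteq> V \<and> finite B \<and> B \<subseteq> E \<and> finite D \<and> D \<subseteq> F \<and>
        V \<subseteq> (\<Union>g\<in>carrier G. av g ` A) \<and> E \<subseteq> (\<Union>g\<in>carrier G. ae g ` B) \<and>
        F \<subseteq> (\<Union>g\<in>carrier G. af g ` D)"
        using comp0 E0E unfolding compact_sub_def V_def E_def F_def
        by (intro exI[of _ V0] exI[of _ E0] exI[of _ F0]) auto
    qed
    have L: "subcomplex X (\<Union>g\<in>carrier G. av g ` V0) (\<Union>g\<in>carrier G. ae g ` E0) (\<Union>g\<in>carrier G. af g ` F0) \<and>
      connected_sub X (\<Union>g\<in>carrier G. av g ` V0) (\<Union>g\<in>carrier G. ae g ` E0) (\<Union>g\<in>carrier G. af g ` F0) \<and>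
      cocompact_sub G av ae af (\<Union>g\<in>carrier G. av g ` V0) (\<Union>g\<in>carrier G. ae g ` E0) (\<Union>g\<in>carrier G. af g ` F0)"
      using subY connY cocY by (simp only: V_def E_def F_def)
    have CVs: "CV \<subseteq> V0" unfolding V0_def T_def by blast
    have CEs: "CE \<subseteq> E0" unfolding E0_def by blast
    have CFs: "CF \<subseteq> F0" unfolding F0_def by blast
    show ?thesis
      apply (rule exI[of _ V0], rule exI[of _ E0], rule exI[of _ F0])
      apply (simp only: Let_def)
      using sub0 comp0 connected0 CVs CEs CFs fg0 L by blast
  qed
qed

end
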